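(* Let $G=(V,E)$ be a non-separable graph with $|V|\ge 3$ and let $x\in V$ with $d(x)\le 3$. If $G-e$ is non-separable for every edge $e$ incident with $x$, then $G/e'$ is non-separable for every edge $e'$ incident with $x$.
   Context: Graphs are finite, undirected, possibly with loops and parallel edges; $d(x)$ counts each loop at $x$ twice. A graph is non-separable if it is connected, has no cut-vertex, and either has no loops or has exactly one vertex and one edge. $G/e$ denotes contraction of the edge $e$. *)

theory Defs
  imports Main
begin

text \<open>Finite multigraphs with loops and parallel edges. Each edge e has a set of
  ends (one element for a loop, two for a non-loop edge).\<close>

record ('v, 'e) mgraph =
  verts :: "'v set"
  edges :: "'e set"
  ends  :: "'e \<Rightarrow> 'v set"

definition wf_graph :: "('v, 'e) mgraph \<Rightarrow> bool" where
  "wf_graph G \<longleftrightarrow> finite (verts G) \<and> finite (edges G) \<and>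
     (\<forall>e\<in>edges G. ends G e \<subseteq> verts G \<and> ends G e \<noteq> {} \<and> card (ends G e) \<le> 2)"

definition is_loop :: "('v, 'e) mgraph \<Rightarrow> 'e \<Rightarrow> bool" where
  "is_loop G e \<longleftrightarrow> card (ends G e) = 1"

definition degree :: "('v, 'e) mgraph \<Rightarrow> 'v \<Rightarrow> nat" where
  "degree G x = (\<Sum>e\<in>edges G. if ends G e = {x} then 2 else if x \<in> ends G e then 1 else 0)"

definition adj :: "('v, 'e) mgraph \<Rightarrow> ('v \<times> 'v) set" where
  "adj G = {(u, v). \<exists>e\<in>edges G. ends G e = {u, v}}"

definition connected :: "('v, 'e) mgraph \<Rightarrow> bool" where
  "connected G \<longleftrightarrow> verts G \<noteq> {} \<and> (\<forall>u\<in>verts G. \<forall>v\<in>verts G. (u, v) \<in> (adj G)\<^sup>*)"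

definition delete_vertex :: "('v, 'e) mgraph \<Rightarrow> 'v \<Rightarrow> ('v, 'e) mgraph" where
  "delete_vertex G v = \<lparr>verts = verts G - {v}, edges = {e\<in>edges G. v \<notin> ends G e}, ends = ends G\<rparr>"

definition delete_edge :: "('v, 'e) mgraph \<Rightarrow> 'e \<Rightarrow> ('v, 'e) mgraph" where
  "delete_edge G e = \<lparr>verts = verts G, edges = edges G - {e}, ends = ends G\<rparr>"

definition cut_vertex :: "('v, 'e) mgraph \<Rightarrow> 'v \<Rightarrow> bool" where
  "cut_vertex G v \<longleftrightarrow> v \<in> verts G \<and>
     (\<exists>u\<in>verts G - {v}. \<exists>w\<in>verts G - {v}. (u, w) \<notin> (adj (delete_vertex G v))\<^sup>*)"

definition nonseparable :: "('v, 'e) mgraph \<Rightarrow> bool" where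
  "nonseparable G \<longleftrightarrow> connected G \<and> (\<forall>v\<in>verts G. \<not> cut_vertex G v) \<and>
     ((\<forall>e\<in>edges G. \<not> is_loop G e) \<or> (card (verts G) = 1 \<and> card (edges G) = 1))"

definition contract :: "('v, 'e) mgraph \<Rightarrow> 'e \<Rightarrow> ('v, 'e) mgraph" where
  "contract G e =
    (if is_loop G e then delete_edge G e
     else (let u = (SOME u. u \<in> ends G e);
               w = (SOME w. w \<in> ends G e \<and> w \<noteq> u);
               f = (\<lambda>z. if z = w then u else z)
           in \<lparr>verts = verts G - {w}, edges = edges G - {e},
               ends = (\<lambda>d. f ` ends G d)\<rparr>))"

end

theory Submission
  imports Defs
begin

lemma rtrancl_map:
  assumes "(a,b) \<in> R\<^sup>*" "\<And>p q. (p,q) \<in> R \<Longrightarrow> f p = f q \<or> (f p, f q) \<in> S"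
  shows "(f a, f b) \<in> S\<^sup>*"
  using assms(1)
proof (induction rule: rtrancl_induct)
  case base show ?case by simp
next
  case (step y z)
  from assms(2)[OF step(2)] step(3) show ?case by (auto intro: rtrancl_into_rtrancl)
qed

lemma first_step: "(a,b) \<in> R\<^sup>* \<Longrightarrow> a \<noteq> b \<Longrightarrow> \<exists>z. (a,z) \<in> R \<and> z \<noteq> a"
  by (induction rule: converse_rtrancl_induct) auto

lemma leaf:
  assumes "(s,t) \<in> R\<^sup>*" "s \<noteq> x" "t \<noteq> x"
   "\<And>z. (z,x) \<in> R \<Longrightarrow> (x,z) \<in> R"
   "\<And>z1 z2. (x,z1) \<in> R \<Longrightarrow> z1 \<noteq> x \<Longrightarrow> (x,z2) \<in> R \<Longrightarrow> z2 \<noteq> x \<Longrightarrow> z1 = z2"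
  shows "(s,t) \<in> {(p,q). (p,q) \<in> R \<and> p \<noteq> x \<and> q \<noteq> x}\<^sup>*"
proof -
  let ?R' = "{(p,q). (p,q) \<in> R \<and> p \<noteq> x \<and> q \<noteq> x}"
  have "(t \<noteq> x \<longrightarrow> (s,t) \<in> ?R'\<^sup>*) \<and> (t = x \<longrightarrow> (\<exists>c. c \<noteq> x \<and> (x,c) \<in> R \<and> (s,c) \<in> ?R'\<^sup>*))"
    using assms(1)
  proof (induction rule: rtrancl_induct)
    case base then show ?case using assms(2) by simp
  next
    case (step y z)
    show ?case
    proof (cases "y = x")
      case True
      then obtain c where c: "c \<noteq> x" "(x,c) \<in> R" "(s,c) \<in> ?R'\<^sup>*" using step.IH by blast
      show ?thesis
      proof (cases "z = x")
        case True then show ?thesis using c by blast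
      next
        case False
        with step(2) \<open>y = x\<close> have "(x,z) \<in> R" by simp
        with c False assms(5) have "z = c" by blast
        with c False show ?thesis by simp
      qed
    next
      case False
      then have ys: "(s,y) \<in> ?R'\<^sup>*" using step.IH by blast
      show ?thesis
      proof (cases "z = x")
        case True
        with step(2) assms(4) have "(x,y) \<in> R" by simp
        with ys False True show ?thesis by blast
      next
        case zx: False
        with False step(2) have "(y,z) \<in> ?R'" by simp
        with ys zx show ?thesis by (meson rtrancl_into_rtrancl)
      qed
    qed
  qed
  with assms(3) show ?thesis by simp
qed

lemma adj_sym: "(a,b) \<in> adj G \<Longrightarrow> (b,a) \<in> adj G"
  unfolding adj_def by (auto simp: insert_commute)

lemma adjI: "d \<in> edges G \<Longrightarrow> ends G d = {a,b} \<Longrightarrow> (a,b) \<in> adj G"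
  by (auto simp: adj_def)

lemma adj_dvI: "d \<in> edges G \<Longrightarrow> v \<notin> ends G d \<Longrightarrow> ends G d = {a,b} \<Longrightarrow> (a,b) \<in> adj (delete_vertex G v)"
  by (auto simp: adj_def delete_vertex_def)

lemma adj_dv_del_E: "(a,b) \<in> adj (delete_vertex (delete_edge G e) v) \<Longrightarrow>
   \<exists>d\<in>edges G. d \<noteq> e \<and> v \<notin> ends G d \<and> ends G d = {a,b}"
  by (auto simp: adj_def delete_vertex_def delete_edge_def)

lemma contract_ns:
  assumes ns: "nonseparable G" and c3: "card (verts G) \<ge> 3" and finV: "finite (verts G)"
  and e: "e \<in> edges G" and ue: "ends G e = {u,w}" and uw: "u \<noteq> w"
  and np: "\<And>d. d \<in> edges G \<Longrightarrow> d \<noteq> e \<Longrightarrow> ends G d \<noteq> ends G e"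
  and cut2: "\<And>s t. s \<in> verts G - ends G e \<Longrightarrow> t \<in> verts G - ends G e \<Longrightarrow>
      (s,t) \<in> {(p,q). \<exists>d\<in>edges G. ends G d \<inter> ends G e = {} \<and> ends G d = {p,q}}\<^sup>*"
  and two: "\<And>d. d \<in> edges G \<Longrightarrow> \<exists>p q. p \<noteq> q \<and> ends G d = {p,q}"
  shows "nonseparable \<lparr>verts = verts G - {w}, edges = edges G - {e},
          ends = (\<lambda>d. (\<lambda>z. if z = w then u else z) ` ends G d)\<rparr>" (is "nonseparable ?H")
proof -
  define f where "f = (\<lambda>z. if z = w then u else z)"
  have Hv: "verts ?H = verts G - {w}" and He: "edges ?H = edges G - {e}"
    and Hends: "ends ?H = (\<lambda>d. f ` ends G d)" by (simp_all add: f_def)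
  have fuw: "\<And>p. p \<in> {u,w} \<Longrightarrow> f p = u" by (auto simp: f_def)
  have fid: "\<And>p. p \<noteq> w \<Longrightarrow> f p = p" by (simp add: f_def)
  have conG: "connected G" and nocut: "\<And>v. v \<in> verts G \<Longrightarrow> \<not> cut_vertex G v"
    using ns by (auto simp: nonseparable_def)
  have nocut': "(s,t) \<in> (adj (delete_vertex G v))\<^sup>*" if "v \<in> verts G" "s \<in> verts G - {v}" "t \<in> verts G - {v}" for v s t
    using nocut[OF that(1)] that unfolding cut_vertex_def by blast
  have map_edge: "f p = f q \<or> (\<exists>d \<in> edges G - {e}. ends G d = {p,q} \<and> ends ?H d = {f p, f q})"
    if "d \<in> edges G" "ends G d = {p,q}" for p q d
  proof (cases "d = e")
    case True then have "{p,q} = {u,w}" using that ue by simp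
    then have "p\<in>{u,w}" "q\<in>{u,w}" by auto
    then show ?thesis using fuw by auto
  next
    case False then show ?thesis using that by (auto simp: f_def)
  qed
  have ne: "verts G - {w} \<noteq> {}"
  proof
    assume "verts G - {w} = {}"
    then have "verts G \<subseteq> {w}" by auto
    then have "card (verts G) \<le> 1" using card_mono[of "{w}"] by auto
    with c3 show False by simp
  qed
  have con: "connected ?H"
    unfolding connected_def
  proof (intro conjI ballI)
    show "verts ?H \<noteq> {}" using ne by simp
    fix s t assume st: "s \<in> verts ?H" "t \<in> verts ?H"
    then have "(s,t) \<in> (adj G)\<^sup>*" using conG by (auto simp: connected_def)
    then have "(f s, f t) \<in> (adj ?H)\<^sup>*"
    proof (rule rtrancl_map)
      fix p q assume "(p,q) \<in> adj G"
      then obtain d where d: "d \<in> edges G" "ends G d = {p,q}" by (auto simp: adj_def)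
      show "f p = f q \<or> (f p, f q) \<in> adj ?H"
      proof (cases "f p = f q")
        case False
        then obtain d' where d': "d' \<in> edges G - {e}" "ends ?H d' = {f p, f q}"
          using map_edge[OF d] by blast
        have "(f p, f q) \<in> adj ?H" by (rule adjI[OF _ d'(2)]) (use d'(1) in simp)
        then show ?thesis by simp
      qed simp
    qed
    moreover have "f s = s" "f t = t" using st fid by auto
    ultimately show "(s,t) \<in> (adj ?H)\<^sup>*" by simp
  qed
  have nocutH: "\<not> cut_vertex ?H v" if v: "v \<in> verts ?H" for v
  proof
    assume "cut_vertex ?H v"
    then obtain s t where st: "s \<in> verts ?H - {v}" "t \<in> verts ?H - {v}"
      and nst: "(s,t) \<notin> (adj (delete_vertex ?H v))\<^sup>*" unfolding cut_vertex_def by blast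
    have "(s,t) \<in> (adj (delete_vertex ?H v))\<^sup>*"
    proof (cases "v = u")
      case True
      have "s \<in> verts G - ends G e" "t \<in> verts G - ends G e" using st True ue by auto
      from cut2[OF this] have P: "(s,t) \<in> {(p,q). \<exists>d\<in>edges G. ends G d \<inter> ends G e = {} \<and> ends G d = {p,q}}\<^sup>*" .
      show ?thesis
      proof (rule rtrancl_mono[THEN subsetD, OF _ P], safe)
        fix p q d assume d: "d \<in> edges G" "ends G d \<inter> ends G e = {}" "ends G d = {p,q}"
        then have "d \<noteq> e" using ue by auto
        have "f ` ends G d = ends G d" using d(2) ue by (auto simp: f_def)
        then show "(p,q) \<in> adj (delete_vertex ?H v)"
          using d \<open>d \<noteq> e\<close> True ue unfolding adj_def delete_vertex_def
          by (auto simp: f_def)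
      qed
    next
      case False
      have vG: "v \<in> verts G" "v \<noteq> w" using v by auto
      have "(s,t) \<in> (adj (delete_vertex G v))\<^sup>*" using st vG by (intro nocut') auto
      then have "(f s, f t) \<in> (adj (delete_vertex ?H v))\<^sup>*"
      proof (rule rtrancl_map)
        fix p q assume "(p,q) \<in> adj (delete_vertex G v)"
        then obtain d where d: "d \<in> edges G" "ends G d = {p,q}" "v \<notin> ends G d"
          by (auto simp: adj_def delete_vertex_def)
        show "f p = f q \<or> (f p, f q) \<in> adj (delete_vertex ?H v)"
        proof (cases "f p = f q")
          case False
          with map_edge[OF d(1,2)] obtain d' where d': "d' \<in> edges G - {e}" "ends G d' = {p,q}"
            "ends ?H d' = {f p, f q}" by blast
          have "v \<notin> {f p, f q}" using d(2,3) False \<open>v \<noteq> u\<close> by (auto simp: f_def)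
          then have "v \<notin> ends ?H d'" using d'(3) by simp
          have "(f p, f q) \<in> adj (delete_vertex ?H v)"
            by (rule adj_dvI[OF _ \<open>v \<notin> ends ?H d'\<close> d'(3)]) (use d'(1) in simp)
          then show ?thesis by simp
        qed simp
      qed
      moreover have "f s = s" "f t = t" using st fid by auto
      ultimately show ?thesis by simp
    qed
    with nst show False by simp
  qed
  have noloop: "\<not> is_loop ?H d" if d: "d \<in> edges ?H" for d
  proof
    assume lp: "is_loop ?H d"
    have dE: "d \<in> edges G" "d \<noteq> e" using d by auto
    obtain p q where pq: "p \<noteq> q" "ends G d = {p,q}" using two[OF dE(1)] by blast
    have Hd: "ends ?H d = {f p, f q}" using pq by (simp add: f_def)
    show False
    proof (cases "f p = f q")
      case True
      then have "{p,q} = {u,w}" using pq(1) uw by (auto simp: f_def split: if_splits)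
      then show False using np[OF dE] pq ue by simp
    next
      case False
      then have "card (ends ?H d) = 2" using Hd by simp
      then show False using lp by (simp add: is_loop_def)
    qed
  qed
  show ?thesis unfolding nonseparable_def using con nocutH noloop by blast
qed

theorem lemma4p1:
  fixes G :: "('v, 'e) mgraph" and x :: 'v
  assumes "wf_graph G"
    and "nonseparable G"
    and "card (verts G) \<ge> 3"
    and "x \<in> verts G"
    and "degree G x \<le> 3"
    and "\<forall>e\<in>edges G. x \<in> ends G e \<longrightarrow> nonseparable (delete_edge G e)"
  shows "\<forall>e'\<in>edges G. x \<in> ends G e' \<longrightarrow> nonseparable (contract G e')"
proof (intro ballI impI)
  fix e' assume e': "e' \<in> edges G" "x \<in> ends G e'"
  note wf = assms(1)
  have finV: "finite (verts G)" and finE: "finite (edges G)"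
    and endsV: "\<And>d. d \<in> edges G \<Longrightarrow> ends G d \<subseteq> verts G"
    and endsne: "\<And>d. d \<in> edges G \<Longrightarrow> ends G d \<noteq> {}"
    and endsle: "\<And>d. d \<in> edges G \<Longrightarrow> card (ends G d) \<le> 2"
    using wf by (auto simp: wf_graph_def)
  have conG: "connected G" and nocut: "\<And>v. v \<in> verts G \<Longrightarrow> \<not> cut_vertex G v"
    using assms(2) by (auto simp: nonseparable_def)
  have nocut': "(s,t) \<in> (adj (delete_vertex G v))\<^sup>*" if "v \<in> verts G" "s \<in> verts G - {v}" "t \<in> verts G - {v}" for v s t
    using nocut[OF that(1)] that unfolding cut_vertex_def by blast
  have nl: "\<And>d. d \<in> edges G \<Longrightarrow> \<not> is_loop G d"
    using assms(2,3) by (auto simp: nonseparable_def)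
  have two: "\<exists>p q. p \<noteq> q \<and> ends G d = {p,q}" if d: "d \<in> edges G" for d
  proof -
    have "finite (ends G d)" using endsV[OF d] finV finite_subset by blast
    then have "card (ends G d) \<noteq> 0" using endsne[OF d] by simp
    moreover have "card (ends G d) \<noteq> 1" using nl[OF d] by (simp add: is_loop_def)
    ultimately have "card (ends G d) = 2" using endsle[OF d] by linarith
    then show ?thesis by (auto simp: card_2_iff)
  qed
  obtain y where y: "ends G e' = {x,y}" "y \<noteq> x"
  proof -
    obtain p q where "p \<noteq> q" "ends G e' = {p,q}" using two[OF e'(1)] by blast
    moreover have "x = p \<or> x = q" using e'(2) \<open>ends G e' = {p,q}\<close> by auto
    ultimately show ?thesis using that[of q] that[of p] by (auto simp: insert_commute)
  qed
  define A where "A = {d \<in> edges G. x \<in> ends G d}"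
  have finA: "finite A" using finE by (simp add: A_def)
  have "degree G x = (\<Sum>d\<in>edges G. if x \<in> ends G d then 1 else 0)"
    unfolding degree_def
  proof (rule sum.cong)
    fix d assume d: "d \<in> edges G"
    then have "ends G d \<noteq> {x}" using two[OF d] by auto
    then show "(if ends G d = {x} then 2 else if x \<in> ends G d then 1 else 0) = (if x \<in> ends G d then 1 else (0::nat))" by simp
  qed simp
  also have "\<dots> = card A" unfolding A_def using finE by (simp add: sum.inter_filter[symmetric])
  finally have cA: "card A \<le> 3" using assms(5) by simp
  have yV: "y \<in> verts G" using endsV[OF e'(1)] y by auto
  have "verts G - {x,y} \<noteq> {}"
  proof
    assume "verts G - {x,y} = {}"
    then have "verts G \<subseteq> {x,y}" by auto
    then have "card (verts G) \<le> card {x,y}" using card_mono[of "{x,y}" "verts G"] by simp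
    also have "\<dots> = 2" using y(2) by simp
    finally show False using assms(3) by simp
  qed
  then obtain s0 where s0: "s0 \<in> verts G - {x,y}" by blast
  have px: "(x,s0) \<in> (adj (delete_vertex G y))\<^sup>*" using nocut'[OF yV] s0 assms(4) y by auto
  obtain z where z: "(x,z) \<in> adj (delete_vertex G y)" "z \<noteq> x" using first_step[OF px] s0 by blast
  then obtain e3 where e3: "e3 \<in> edges G" "y \<notin> ends G e3" "ends G e3 = {x,z}"
    by (auto simp: adj_def delete_vertex_def)
  have e3ne: "e3 \<noteq> e'" using e3(2) y by auto
  have "card (A - {e',e3}) = card A - 2"
    using finA e' e3 e3ne by (subst card_Diff_subset) (auto simp: A_def)
  then have c1: "card (A - {e',e3}) \<le> Suc 0" using cA by linarith
  have fin: "finite (A - {e',e3})" using finA by blast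
  have uq: "\<forall>a\<in>A - {e',e3}. \<forall>b\<in>A - {e',e3}. a = b"
    using c1 unfolding card_le_Suc0_iff_eq[OF fin] .
  have uniq: "\<And>a b. a \<in> A - {e',e3} \<Longrightarrow> b \<in> A - {e',e3} \<Longrightarrow> a = b"
    using uq by blast
  define H where "H = delete_edge G e3"
  have nsH: "nonseparable H" using assms(6) e3 by (simp add: H_def)
  have vH: "verts H = verts G" by (simp add: H_def delete_edge_def)
  have pathsH: "(s,t) \<in> (adj (delete_vertex H y))\<^sup>*" if "s \<in> verts G - {y}" "t \<in> verts G - {y}" for s t
    using nsH yV that vH unfolding nonseparable_def cut_vertex_def by auto
  define R where "R = adj (delete_vertex H y)"
  have Rx: "\<exists>d. d \<in> A - {e',e3} \<and> ends G d = {x,z1} \<and> y \<notin> ends G d" if Rxz: "(x,z1) \<in> R" for z1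
  proof -
    obtain d where d: "d \<in> edges G" "d \<noteq> e3" "y \<notin> ends G d" "ends G d = {x,z1}"
      using adj_dv_del_E[of x z1 G e3 y] Rxz unfolding R_def H_def by blast
    then have "d \<noteq> e'" using y by auto
    then show ?thesis using d by (auto simp: A_def)
  qed
  have np: "ends G d \<noteq> ends G e'" if d: "d \<in> edges G" "d \<noteq> e'" for d
  proof
    assume eq: "ends G d = ends G e'"
    then have dA: "d \<in> A - {e',e3}" using d e3ne e3(2) y e'(2) by (auto simp: A_def)
    have zV: "z \<in> verts G - {y}" using endsV[OF e3(1)] e3 by auto
    have pz: "(x,z) \<in> R\<^sup>*" unfolding R_def using pathsH[OF _ zV] assms(4) y by auto
    obtain z1 where "(x,z1) \<in> R" "z1 \<noteq> x" using first_step[OF pz] z(2) by blast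
    then obtain d1 where "d1 \<in> A - {e',e3}" "y \<notin> ends G d1" using Rx by blast
    with uniq[OF dA] eq y show False by auto
  qed
  have cut2: "(s,t) \<in> {(p,q). \<exists>d\<in>edges G. ends G d \<inter> ends G e' = {} \<and> ends G d = {p,q}}\<^sup>*"
    if st: "s \<in> verts G - ends G e'" "t \<in> verts G - ends G e'" for s t
  proof -
    have "(s,t) \<in> R\<^sup>*" unfolding R_def using pathsH st y by auto
    then have "(s,t) \<in> {(p,q). (p,q) \<in> R \<and> p \<noteq> x \<and> q \<noteq> x}\<^sup>*"
    proof (rule leaf)
      show "s \<noteq> x" "t \<noteq> x" using st y by auto
      show "(x,z) \<in> R" if "(z,x) \<in> R" for z using adj_sym[OF that[unfolded R_def]] unfolding R_def .
      fix z1 z2 assume "(x,z1) \<in> R" "z1 \<noteq> x" "(x,z2) \<in> R" "z2 \<noteq> x"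
      then obtain d1 d2 where "d1 \<in> A - {e',e3}" "ends G d1 = {x,z1}" "d2 \<in> A - {e',e3}" "ends G d2 = {x,z2}"
        using Rx[of z1] Rx[of z2] by blast
      then have "{x,z1} = {x,z2}" using uniq[of d1 d2] by simp
      with \<open>z1 \<noteq> x\<close> show "z1 = z2" by (auto simp: doubleton_eq_iff)
    qed
    then show ?thesis
    proof (rule rtrancl_mono[THEN subsetD, rotated], safe)
      fix p q assume "(p,q) \<in> R" "p \<noteq> x" "q \<noteq> x"
      then obtain d where d: "d \<in> edges G" "y \<notin> ends G d" "ends G d = {p,q}"
        using adj_dv_del_E[of p q G e3 y] \<open>(p,q) \<in> R\<close> unfolding R_def H_def by blast
      then have "ends G d \<inter> ends G e' = {}" using y \<open>p \<noteq> x\<close> \<open>q \<noteq> x\<close> by auto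
      then show "\<exists>d\<in>edges G. ends G d \<inter> ends G e' = {} \<and> ends G d = {p,q}" using d by blast
    qed
  qed
  define u where "u = (SOME u. u \<in> ends G e')"
  define w where "w = (SOME w. w \<in> ends G e' \<and> w \<noteq> u)"
  have u: "u \<in> ends G e'" unfolding u_def using e'(2) by (rule someI)
  have exw: "\<exists>w. w \<in> ends G e' \<and> w \<noteq> u" using u y by auto
  have w: "w \<in> ends G e'" "w \<noteq> u" using someI_ex[OF exw] unfolding w_def by auto
  have ue: "ends G e' = {u,w}" using u w y by auto
  have nlp: "\<not> is_loop G e'" using nl e'(1) .
  have "contract G e' = \<lparr>verts = verts G - {w}, edges = edges G - {e'},
          ends = (\<lambda>d. (\<lambda>z. if z = w then u else z) ` ends G d)\<rparr>"
    unfolding contract_def Let_def using nlp by (simp flip: u_def w_def)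
  moreover have "nonseparable \<lparr>verts = verts G - {w}, edges = edges G - {e'},
          ends = (\<lambda>d. (\<lambda>z. if z = w then u else z) ` ends G d)\<rparr>"
    by (rule contract_ns[OF assms(2,3) finV e'(1) ue w(2)[symmetric] np cut2 two]) auto
  ultimately show "nonseparable (contract G e')" by simp
qed

end
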